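(* Let $X$ be a finite $T_0$-space admitting a free action of $\mathbb{Z}_2$ by homeomorphisms. Then (for a suitable labelling of $X$) $X_M$ is a block matrix $(A_{i,j})_{i,j=1,2}$ with blocks of size $\frac{|X|}{2}\times\frac{|X|}{2}$ such that $A_{1,1}=A_{2,2}$ and $A_{1,2}=A_{2,1}$. In particular, $\det(X_M)=\det(A_{1,1}+A_{1,2})\det(A_{1,1}-A_{1,2})$.
   Context: A finite $T_0$-space is identified with a finite poset via $x\le y$ iff $U_x\subseteq U_y$, where $U_x$ is the minimal open set containing $x$. For a labelling $X=\{x_1,\dots,x_n\}$, $X_M=(x_{i,j})$ is the $n\times n$ matrix with $x_{i,j}=0$ if $x_i\le x_j$ and $x_{i,j}=1$ otherwise. *)

theory Defs
  imports "HOL-Analysis.Abstract_Topological_Spaces" "Jordan_Normal_Form.Determinant"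
begin

definition minimal_open :: "'a topology \<Rightarrow> 'a \<Rightarrow> 'a set" where
  "minimal_open X x = \<Inter>{U. openin X U \<and> x \<in> U}"

definition spec_le :: "'a topology \<Rightarrow> 'a \<Rightarrow> 'a \<Rightarrow> bool" where
  "spec_le X x y \<longleftrightarrow> minimal_open X x \<subseteq> minimal_open X y"

definition space_matrix :: "'a topology \<Rightarrow> (nat \<Rightarrow> 'a) \<Rightarrow> nat \<Rightarrow> int mat" where
  "space_matrix X lab n = mat n n (\<lambda>(i, j). if spec_le X (lab i) (lab j) then 0 else 1)"

end

theory Submission
  imports Defs
begin

lemma spec_le_iff: "spec_le X x y \<longleftrightarrow> (\<forall>U. openin X U \<and> y \<in> U \<longrightarrow> x \<in> U)"
  unfolding spec_le_def minimal_open_def by blast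

lemma spec_le_tau:
  assumes "continuous_map X X \<tau>" "x \<in> topspace X" "y \<in> topspace X" "spec_le X x y"
  shows "spec_le X (\<tau> x) (\<tau> y)"
  unfolding spec_le_iff
proof (intro allI impI)
  fix U assume U: "openin X U \<and> \<tau> y \<in> U"
  have "openin X {z \<in> topspace X. \<tau> z \<in> U}" using openin_continuous_map_preimage[OF assms(1)] U by blast
  moreover have "y \<in> {z \<in> topspace X. \<tau> z \<in> U}" using U assms by auto
  ultimately have "x \<in> {z \<in> topspace X. \<tau> z \<in> U}" using assms(4) unfolding spec_le_iff by blast
  then show "\<tau> x \<in> U" by auto
qed

lemma det_block:
  fixes A B :: "'a :: idom mat"
  assumes A: "A \<in> carrier_mat m m" and B: "B \<in> carrier_mat m m"
  shows "det (four_block_mat A B B A) = det (A + B) * det (A - B)"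
proof -
  let ?M = "four_block_mat A B B A"
  let ?L = "four_block_mat (1\<^sub>m m) (0\<^sub>m m m) (- 1\<^sub>m m) (1\<^sub>m m) :: 'a mat"
  let ?R = "four_block_mat (1\<^sub>m m) (0\<^sub>m m m) (1\<^sub>m m) (1\<^sub>m m) :: 'a mat"
  have M: "?M \<in> carrier_mat (m+m) (m+m)" using A B by auto
  have L: "?L \<in> carrier_mat (m+m) (m+m)" by auto
  have R: "?R \<in> carrier_mat (m+m) (m+m)" by auto
  have dL: "det ?L = 1"
    by (subst det_four_block_mat_upper_right_zero[of _ m _ m], auto)
  have dR: "det ?R = 1"
    by (subst det_four_block_mat_upper_right_zero[of _ m _ m], auto)
  have MR: "?M * ?R = four_block_mat (A + B) B (B + A) A"
    by (subst mult_four_block_mat[OF A B B A], insert A B, auto)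
  have LMR: "?L * (?M * ?R) = four_block_mat (A + B) B (0\<^sub>m m m) (A - B)"
    unfolding MR
    apply (subst mult_four_block_mat[of _ m m _ m _ m], insert A B, auto)
    done
  have "det (?L * (?M * ?R)) = det ?L * (det ?M * det ?R)"
    using det_mult[OF L mult_carrier_mat[OF M R]] det_mult[OF M R] by simp
  then have "det ?M = det (four_block_mat (A + B) B (0\<^sub>m m m) (A - B))" using dL dR LMR by simp
  also have "\<dots> = det (A + B) * det (A - B)"
    by (rule det_four_block_mat_lower_left_zero, insert A B, auto)
  finally show ?thesis .
qed

theorem mainTheorem18:
  fixes X :: "'a topology" and \<tau> :: "'a \<Rightarrow> 'a"
  assumes "finite (topspace X)"
    and "t0_space X"
    and "homeomorphic_map X X \<tau>"
    and "\<forall>x \<in> topspace X. \<tau> (\<tau> x) = x"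
    and "\<forall>x \<in> topspace X. \<tau> x \<noteq> x"
  shows "\<exists>lab m A B.
           bij_betw lab {..<card (topspace X)} (topspace X) \<and>
           card (topspace X) = 2 * m \<and>
           A \<in> carrier_mat m m \<and> B \<in> carrier_mat m m \<and>
           space_matrix X lab (card (topspace X)) = four_block_mat A B B A \<and>
           det (space_matrix X lab (card (topspace X))) = det (A + B) * det (A - B)"
proof -
  define T where "T = topspace X"
  have cont: "continuous_map X X \<tau>" using assms(3) homeomorphic_imp_continuous_map by blast
  have tT: "\<tau> x \<in> T" if "x \<in> T" for x using cont that unfolding T_def continuous_map_def by blast
  have inv: "\<tau> (\<tau> x) = x" if "x \<in> T" for x using assms(4) that T_def by auto
  have nf: "\<tau> x \<noteq> x" if "x \<in> T" for x using assms(5) that T_def by auto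
  have sl: "spec_le X (\<tau> x) (\<tau> y) = spec_le X x y" if "x \<in> T" "y \<in> T" for x y
    using spec_le_tau[OF cont, of x y] spec_le_tau[OF cont, of "\<tau> x" "\<tau> y"] that tT inv
    unfolding T_def by auto
  define rep where "rep x = (SOME y. y \<in> {x, \<tau> x})" for x
  have rep_in: "rep x \<in> {x, \<tau> x}" for x unfolding rep_def by (rule someI_ex) auto
  have rep_tau: "rep (\<tau> x) = rep x" if "x \<in> T" for x
  proof -
    have "{\<tau> x, \<tau> (\<tau> x)} = {x, \<tau> x}" using inv[OF that] by auto
    then show ?thesis unfolding rep_def by simp
  qed
  define S where "S = {x \<in> T. rep x = x}"
  have ST: "S \<subseteq> T" unfolding S_def by auto
  have fin: "finite T" using assms(1) T_def by simp
  have finS: "finite S" using ST fin finite_subset by blast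
  have disj: "S \<inter> \<tau> ` S = {}"
  proof (rule ccontr)
    assume "S \<inter> \<tau> ` S \<noteq> {}"
    then obtain y where y: "y \<in> S" "\<tau> y \<in> S" by auto
    then have "rep y = y" "rep (\<tau> y) = \<tau> y" "y \<in> T" unfolding S_def by auto
    then show False using rep_tau nf by metis
  qed
  have cover: "S \<union> \<tau> ` S = T"
  proof
    show "S \<union> \<tau> ` S \<subseteq> T" using ST tT by auto
    show "T \<subseteq> S \<union> \<tau> ` S"
    proof
      fix x assume x: "x \<in> T"
      show "x \<in> S \<union> \<tau> ` S"
      proof (cases "rep x = x")
        case True then show ?thesis using x S_def by auto
      next
        case False
        then have "rep x = \<tau> x" using rep_in[of x] by auto
        then have "\<tau> x \<in> S" using rep_tau[OF x] tT[OF x] S_def by auto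
        then show ?thesis using inv[OF x] by (metis UnI2 image_eqI)
      qed
    qed
  qed
  have injS: "inj_on \<tau> S" using ST inv by (metis inj_on_def subsetD)
  define m where "m = card S"
  have cardT: "card T = 2 * m"
  proof -
    have "card T = card S + card (\<tau> ` S)" using cover disj finS card_Un_disjoint
      by (metis finite_imageI)
    then show ?thesis using card_image[OF injS] m_def by simp
  qed
  obtain f where f: "bij_betw f {0..<m} S" using ex_bij_betw_nat_finite[OF finS] m_def by blast
  have fS: "f i \<in> S" if "i < m" for i using f that bij_betwE by fastforce
  have fT: "f i \<in> T" if "i < m" for i using fS[OF that] ST by auto
  define lab where "lab i = (if i < m then f i else \<tau> (f (i - m)))" for i
  have bij: "bij_betw lab {..<card T} T"
  proof -
    have b1: "bij_betw lab {..<m} S"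
      using f[unfolded atLeast0LessThan] by (rule bij_betw_cong[THEN iffD1, rotated]) (auto simp: lab_def)
    have b2': "bij_betw (\<lambda>i. \<tau> (f (i - m))) {m..<2*m} (\<tau> ` S)"
    proof -
      have "bij_betw (\<lambda>i. i - m) {m..<2*m} {0..<m}"
        by (rule bij_betwI[where g="\<lambda>i. i + m"]) auto
      moreover have "bij_betw \<tau> S (\<tau> ` S)" using injS by (simp add: bij_betw_imageI)
      ultimately show ?thesis using f bij_betw_trans unfolding comp_def by metis
    qed
    have b2: "bij_betw lab {m..<2*m} (\<tau> ` S)"
      using b2' by (rule bij_betw_cong[THEN iffD1, rotated]) (auto simp: lab_def)
    have "bij_betw lab ({..<m} \<union> {m..<2*m}) (S \<union> \<tau> ` S)"
      by (rule bij_betw_combine[OF b1 b2 disj])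
    moreover have "{..<m} \<union> {m..<2*m} = {..<card T}" using cardT by auto
    ultimately show ?thesis using cover by simp
  qed
  define e where "e x y = (if spec_le X x y then 0 else 1 :: int)" for x y
  define A where "A = mat m m (\<lambda>(i,j). e (f i) (f j))"
  define B where "B = mat m m (\<lambda>(i,j). e (f i) (\<tau> (f j)))"
  have A: "A \<in> carrier_mat m m" and B: "B \<in> carrier_mat m m" unfolding A_def B_def by auto
  have eq: "space_matrix X lab (card T) = four_block_mat A B B A"
  proof (rule eq_matI)
    fix i j assume i: "i < dim_row (four_block_mat A B B A)" and j: "j < dim_col (four_block_mat A B B A)"
    then have i2: "i < 2 * m" and j2: "j < 2 * m" using A B by auto
    show "space_matrix X lab (card T) $$ (i, j) = four_block_mat A B B A $$ (i, j)"
    proof -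
      have lhs: "space_matrix X lab (card T) $$ (i, j) = e (lab i) (lab j)"
        unfolding space_matrix_def e_def using i2 j2 cardT by simp
      have rhs: "four_block_mat A B B A $$ (i,j) = (if i<m then if j<m then A$$(i,j) else B$$(i,j-m) else if j<m then B$$(i-m,j) else A$$(i-m,j-m))"
        by (subst index_mat_four_block) (use A B i2 j2 in auto)
      show ?thesis unfolding lhs rhs
      proof (cases "i < m"; cases "j < m")
        assume "i < m" "j < m" then show "e (lab i) (lab j) = (if i<m then if j<m then A$$(i,j) else B$$(i,j-m) else if j<m then B$$(i-m,j) else A$$(i-m,j-m))"
          by (simp add: lab_def A_def)
      next
        assume "i < m" "\<not> j < m" then show "e (lab i) (lab j) = (if i<m then if j<m then A$$(i,j) else B$$(i,j-m) else if j<m then B$$(i-m,j) else A$$(i-m,j-m))"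
          using j2 by (simp add: lab_def B_def)
      next
        assume h: "\<not> i < m" "j < m"
        have "e (\<tau> (f (i - m))) (f j) = e (f (i - m)) (\<tau> (f j))"
          using sl[of "f (i - m)" "\<tau> (f j)"] fT[of "i-m"] fT[of j] inv[of "f j"] tT[of "f j"] h i2
          unfolding e_def by simp
        then show "e (lab i) (lab j) = (if i<m then if j<m then A$$(i,j) else B$$(i,j-m) else if j<m then B$$(i-m,j) else A$$(i-m,j-m))"
          using h i2 by (simp add: lab_def B_def)
      next
        assume h: "\<not> i < m" "\<not> j < m"
        have "e (\<tau> (f (i - m))) (\<tau> (f (j - m))) = e (f (i - m)) (f (j - m))"
          using sl[of "f (i - m)" "f (j - m)"] fT[of "i-m"] fT[of "j-m"] h i2 j2
          unfolding e_def by simp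
        then show "e (lab i) (lab j) = (if i<m then if j<m then A$$(i,j) else B$$(i,j-m) else if j<m then B$$(i-m,j) else A$$(i-m,j-m))"
          using h i2 j2 by (simp add: lab_def A_def)
      qed
    qed
  qed (use A B cardT in \<open>auto simp: space_matrix_def\<close>)
  show ?thesis
    apply (rule exI[of _ lab], rule exI[of _ m], rule exI[of _ A], rule exI[of _ B])
    using bij cardT A B eq det_block[OF A B] unfolding T_def by auto
qed

end
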